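(* Let $n\ge k\ge 3$ be integers. Then \[ \mathsf{opt}_{\operatorname{bandit}}^{\operatorname{det}}(n,k)\ge \left(\frac{k}{2}-1\right)\ln(n/k). \]
   Context: Prediction with expert advice in the realizable case: $\mathcal{Y}=\{1,\dots,k\}$, $\mathcal{X}=[k]^n$, experts $h_i(x)=x_i$, $i=1,\dots,n$. $\mathcal{P}_0$ is the set of finite sequences of examples in $\mathcal{X}\times\mathcal{Y}$ consistent with some $h_i$. Bandit feedback: each round the adversary presents $x_t$, a deterministic learner predicts $\hat y_t$ as a function of past observations and $x_t$, and learns only whether $\hat y_t$ equals the true label $y_t$. $\mathsf{opt}_{\operatorname{bandit}}^{\operatorname{det}}(n,k)$ is the infimum over deterministic learners of the supremum over $S\in\mathcal{P}_0$ of the number of mistakes ($\hat y_t\ne y_t$). *)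

theory Defs
  imports Complex_Main "HOL-Library.Extended_Real"
begin

text \<open>Instances x in X = [k]^n are lists of length n with entries in {1..k};
 labels are in Y = {1..k}. Expert i (i < n, 0-indexed) predicts x ! i.\<close>

definition instances :: "nat \<Rightarrow> nat \<Rightarrow> nat list set" where
  "instances n k = {x. length x = n \<and> set x \<subseteq> {1..k}}"

definition realizable_seqs :: "nat \<Rightarrow> nat \<Rightarrow> (nat list \<times> nat) list set" where
  "realizable_seqs n k = {S. (\<forall>(x, y) \<in> set S. x \<in> instances n k \<and> y \<in> {1..k}) \<and>
      (\<exists>i < n. \<forall>(x, y) \<in> set S. x ! i = y)}"

text \<open>Observation history: past instances, the learner's predictions and the bandit feedback bit.\<close>
type_synonym history = "(nat list \<times> nat \<times> bool) list"
type_synonym learner = "history \<Rightarrow> nat list \<Rightarrow> nat"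

definition det_learners :: "nat \<Rightarrow> learner set" where
  "det_learners k = {L. \<forall>h x. L h x \<in> {1..k}}"

fun mistakes_from :: "learner \<Rightarrow> history \<Rightarrow> (nat list \<times> nat) list \<Rightarrow> nat" where
  "mistakes_from L h [] = 0"
| "mistakes_from L h ((x, y) # S) =
     (let p = L h x in (if p \<noteq> y then 1 else 0) + mistakes_from L (h @ [(x, p, p = y)]) S)"

definition mistakes :: "learner \<Rightarrow> (nat list \<times> nat) list \<Rightarrow> nat" where
  "mistakes L S = mistakes_from L [] S"

definition opt_bandit_det :: "nat \<Rightarrow> nat \<Rightarrow> ereal" where
  "opt_bandit_det n k =
     (INF L \<in> det_learners k. SUP S \<in> realizable_seqs n k. ereal (real (mistakes L S)))"

end

theory Submission
  imports Defs
begin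

lemma class_card:
  fixes m k p :: nat
  assumes "k \<ge> 1" "m \<ge> 1"
  shows "card {t\<in>{0..<m}. t mod k + 1 = p} \<le> (m + k - 1) div k"
proof -
  have "{t\<in>{0..<m}. t mod k + 1 = p} \<subseteq> (\<lambda>q. q*k + (p-1)) ` {..<(m + k - 1) div k}"
  proof
    fix t assume t: "t \<in> {t\<in>{0..<m}. t mod k + 1 = p}"
    have e: "t = (t div k)*k + (p-1)" using t by (auto simp: div_mult_mod_eq)
    have "t div k \<le> (m - 1) div k" using t by (auto intro: div_le_mono)
    moreover have "(m + k - 1) div k = (m - 1) div k + 1"
      using assms by (metis Nat.add_diff_assoc2 add_diff_cancel_left' div_add_self2 not_one_le_zero)
    ultimately have "t div k < (m + k - 1) div k" by simp
    then show "t \<in> (\<lambda>q. q*k + (p-1)) ` {..<(m + k - 1) div k}" using e by blast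
  qed
  then have "card {t\<in>{0..<m}. t mod k + 1 = p} \<le> card ((\<lambda>q. q*k + (p-1)) ` {..<(m + k - 1) div k})"
    by (intro card_mono) auto
  also have "\<dots> \<le> (m + k - 1) div k" using card_image_le[of "{..<(m + k - 1) div k}"] by simp
  finally show ?thesis .
qed

lemma adv:
  fixes L :: learner and k n :: nat
  assumes k3: "3 \<le> k"
  shows "finite V \<Longrightarrow> card V = m \<Longrightarrow> V \<subseteq> {..<n} \<Longrightarrow> m \<ge> 1 \<Longrightarrow>
    \<exists>xs. \<exists>i\<in>V. set xs \<subseteq> instances n k \<and>
      (real k / 2 - 1) * ln (real m / real k) \<le> real (mistakes_from L h (map (\<lambda>x. (x, x!i)) xs))"
proof (induction m arbitrary: V h rule: less_induct)
  case (less m)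
  show ?case
  proof (cases "m < k")
    case True
    obtain i where i: "i \<in> V" using less by fastforce
    have "ln (real m / real k) \<le> 0" using True less by simp
    moreover have "real k / 2 - 1 \<ge> 0" using k3 by simp
    ultimately have "(real k / 2 - 1) * ln (real m / real k) \<le> 0"
      by (simp add: mult_nonneg_nonpos)
    then show ?thesis using i by (intro exI[of _ "[]"]) auto
  next
    case False
    define c where "c = (m + k - 1) div k"
    obtain g where g: "bij_betw g V {0..<m}" using ex_bij_betw_finite_nat[OF less(2)] less(3) by blast
    define x where "x = map (\<lambda>j. if j \<in> V then g j mod k + 1 else 1) [0..<n]"
    have xj: "x ! j = g j mod k + 1" if "j \<in> V" for j
      using that less(4) unfolding x_def by auto
    have xinst: "x \<in> instances n k"
      unfolding instances_def x_def using k3 by (auto simp: Suc_le_eq)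
    define p where "p = L h x"
    define V' where "V' = {j\<in>V. x!j \<noteq> p}"
    define W where "W = {j\<in>V. x!j = p}"
    have "W = {j\<in>V. g j mod k + 1 = p}" unfolding W_def using xj by auto
    then have sub: "g ` W \<subseteq> {t\<in>{0..<m}. t mod k + 1 = p}"
      using bij_betw_apply[OF g] by blast
    have WV: "W \<subseteq> V" unfolding W_def by blast
    have "inj_on g W" using g WV unfolding bij_betw_def using inj_on_subset by blast
    then have "card W = card (g ` W)" by (simp add: card_image)
    also have "\<dots> \<le> card {t\<in>{0..<m}. t mod k + 1 = p}" using sub by (intro card_mono) auto
    also have "\<dots> \<le> c" unfolding c_def using class_card[of k m p] k3 less(5) by simp
    finally have cW: "card W \<le> c" .
    have "V = V' \<union> W" unfolding V'_def W_def by auto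
    then have "card V \<le> card V' + card W" using card_Un_le[of V' W] by simp
    then have "m \<le> card V' + card W" using less(3) by simp
    then have "m - c \<le> card V'" using cW by simp
    then obtain V'' where V'': "V'' \<subseteq> V'" "card V'' = m - c" "finite V''"
      by (meson obtain_subset_with_card_n)
    have kc: "k * c \<le> m + k - 1" unfolding c_def by simp
    have kc2: "k * c \<le> 2 * m" using kc False by linarith
    have cm: "c < m"
    proof -
      have "k - 1 < (k - 1) * m" using False k3 by simp
      then have "m + k - 1 < k * m" using k3 by (simp add: algebra_simps diff_mult_distrib)
      then have "k * c < k * m" using kc by linarith
      then show ?thesis by simp
    qed
    have "k div k \<le> (m + k - 1) div k" using False by (intro div_le_mono) simp
    then have c1: "c \<ge> 1" unfolding c_def using k3 by simp
    have lt: "m - c < m" and ge: "m - c \<ge> 1" using cm c1 by auto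
    have Vn: "V'' \<subseteq> {..<n}" using V''(1) less(4) unfolding V'_def by blast
    obtain xs i where i: "i \<in> V''" and xs: "set xs \<subseteq> instances n k"
      and ih: "(real k / 2 - 1) * ln (real (m - c) / real k) \<le>
         real (mistakes_from L (h @ [(x, p, False)]) (map (\<lambda>x. (x, x!i)) xs))"
      using less(1)[OF lt V''(3) V''(2) Vn ge, of "h @ [(x, p, False)]"] by blast
    have iV: "i \<in> V" and pi: "p \<noteq> x ! i" using i V''(1) unfolding V'_def by blast+
    have mist: "mistakes_from L h (map (\<lambda>x. (x, x!i)) (x # xs)) =
        1 + mistakes_from L (h @ [(x, p, False)]) (map (\<lambda>x. (x, x!i)) xs)"
      using pi by (simp add: p_def[symmetric] Let_def)
    define m' where "m' = m - c"
    have m'pos: "real m' \<ge> 1" using ge m'_def by simp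
    have rm: "real m = real m' + real c" using cm m'_def by simp
    have kc2r: "real k * real c \<le> 2 * real m" using kc2 by (metis of_nat_le_iff of_nat_mult of_nat_numeral)
    have "ln (real m) - ln (real m') = ln (real m / real m')" using m'pos rm by (simp add: ln_div)
    also have "\<dots> \<le> real m / real m' - 1" using m'pos rm by (intro ln_le_minus_one) simp
    also have "\<dots> = real c / real m'" using m'pos rm by (simp add: field_simps)
    finally have l1: "ln (real m) - ln (real m') \<le> real c / real m'" .
    have "(real k / 2 - 1) * (real c / real m') \<le> 1"
    proof -
      have "(real k - 2) * real c \<le> 2 * real m'" using kc2r rm by (simp add: algebra_simps)
      then show ?thesis using m'pos by (simp add: field_simps)
    qed
    then have "(real k / 2 - 1) * (ln (real m) - ln (real m')) \<le> 1"
      using mult_left_mono[OF l1, of "real k / 2 - 1"] k3 by linarith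
    moreover have e1: "ln (real m / real k) = ln (real m) - ln (real k)"
      and e2: "ln (real m' / real k) = ln (real m') - ln (real k)"
      using m'pos rm k3 by (simp_all add: ln_div)
    moreover have "(real k / 2 - 1) * ln (real m / real k) - (real k / 2 - 1) * ln (real m' / real k)
       = (real k / 2 - 1) * (ln (real m) - ln (real m'))" unfolding e1 e2 by (simp add: algebra_simps)
    ultimately have "(real k / 2 - 1) * ln (real m / real k) \<le> 1 + (real k / 2 - 1) * ln (real m' / real k)"
      by linarith
    also have "\<dots> \<le> real (mistakes_from L h (map (\<lambda>x. (x, x!i)) (x # xs)))"
      using ih mist m'_def by simp
    finally have fin: "(real k / 2 - 1) * ln (real m / real k) \<le> real (mistakes_from L h (map (\<lambda>x. (x, x!i)) (x # xs)))" .
    have "set (x # xs) \<subseteq> instances n k" using xs xinst by simp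
    then show ?thesis using iV fin by (intro exI[of _ "x # xs"] bexI[OF _ iV] conjI)
  qed
qed

theorem lemma4p5:
  fixes n k :: nat
  assumes "3 \<le> k" and "k \<le> n"
  shows "ereal ((real k / 2 - 1) * ln (real n / real k)) \<le> opt_bandit_det n k"
proof -
  show ?thesis unfolding opt_bandit_det_def
  proof (rule INF_greatest)
    fix L assume "L \<in> det_learners k"
    obtain xs i where i: "i \<in> {..<n}" and xs: "set xs \<subseteq> instances n k"
      and b: "(real k / 2 - 1) * ln (real n / real k) \<le> real (mistakes_from L [] (map (\<lambda>x. (x, x!i)) xs))"
      using adv[OF assms(1), of "{..<n}" n n L "[]"] assms by fastforce
    define S where "S = map (\<lambda>x. (x, x!i)) xs"
    have "S \<in> realizable_seqs n k"
    proof -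
      have A: "x \<in> instances n k \<and> x ! i \<in> {1..k}" if "x \<in> set xs" for x
      proof -
        have xi: "x \<in> instances n k" using that xs by blast
        then have "length x = n" "set x \<subseteq> {1..k}" unfolding instances_def by auto
        then have "x ! i \<in> set x" using i by simp
        then have "x ! i \<in> {1..k}" using \<open>set x \<subseteq> {1..k}\<close> by blast
        then show ?thesis using xi by blast
      qed
      show ?thesis unfolding realizable_seqs_def S_def using A i by auto
    qed
    moreover have "ereal ((real k / 2 - 1) * ln (real n / real k)) \<le> ereal (real (mistakes L S))"
      using b unfolding mistakes_def S_def by simp
    ultimately show "ereal ((real k / 2 - 1) * ln (real n / real k)) \<le> (SUP S \<in> realizable_seqs n k. ereal (real (mistakes L S)))"
      by (meson SUP_upper order_trans)
  qed
qed

end
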